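(* Every $n\times n$ Gram-Lorentz matrix $X$ is the Gram matrix of some vectors $\ell_1,\dots,\ell_n\in\mathcal{L}_{\mathrm{rank}(X)+2}$.
   Context: The $m$-dimensional Lorentz cone is $\mathcal{L}_m:=\{(c,x)\in\mathbb{R}\times\mathbb{R}^{m-1}: c\ge\|x\|\}$. An $n\times n$ real symmetric matrix $X$ is Gram-Lorentz if there exist $m\ge1$ and vectors $\ell_1,\dots,\ell_n\in\mathcal{L}_m$ with $X_{ij}=\langle\ell_i,\ell_j\rangle$ for all $i,j$. *)

theory Defs
  imports "HOL-Analysis.Analysis"
begin

text \<open>Vectors of R^m are represented as functions nat => real vanishing outside {..<m};
  coordinate 0 is the "c" coordinate, coordinates 1..m-1 form x.\<close>

definition in_Rm :: "nat \<Rightarrow> (nat \<Rightarrow> real) \<Rightarrow> bool" where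
  "in_Rm m v \<longleftrightarrow> (\<forall>i\<ge>m. v i = 0)"

definition lorentz_cone :: "nat \<Rightarrow> (nat \<Rightarrow> real) set" where
  "lorentz_cone m = {v. 1 \<le> m \<and> in_Rm m v \<and> sqrt (\<Sum>i\<in>{1..<m}. (v i)\<^sup>2) \<le> v 0}"

definition inner_Rm :: "nat \<Rightarrow> (nat \<Rightarrow> real) \<Rightarrow> (nat \<Rightarrow> real) \<Rightarrow> real" where
  "inner_Rm m u v = (\<Sum>i<m. u i * v i)"

definition gram_lorentz :: "real^'n^'n \<Rightarrow> bool" where
  "gram_lorentz X \<longleftrightarrow> transpose X = X \<and>
     (\<exists>m\<ge>1. \<exists>l :: 'n \<Rightarrow> nat \<Rightarrow> real. (\<forall>i. l i \<in> lorentz_cone m) \<and>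
        (\<forall>i j. X $ i $ j = inner_Rm m (l i) (l j)))"

end

theory Submission imports Defs begin
lemma core:
  fixes f :: "nat \<Rightarrow> 'a::euclidean_space"
  shows "\<exists>q g. q \<le> dim (f ` {..<p}) \<and>
     (\<forall>a b. (\<Sum>k<q. (g k \<bullet> a) * (g k \<bullet> b)) = (\<Sum>k<p. (f k \<bullet> a) * (f k \<bullet> b)))"
proof (induction "dim (f ` {..<p})" arbitrary: f rule: less_induct)
  case less
  show ?case
  proof (cases "\<forall>k<p. f k = 0")
    case True
    then show ?thesis by (rule_tac x=0 in exI) auto
  next
    case False
    then obtain k0 where k0: "k0 < p" "f k0 \<noteq> 0" by auto
    define v where "v = f k0"
    define Q where "Q a b = (\<Sum>k<p. (f k \<bullet> a) * (f k \<bullet> b))" for a b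
    have "(f k0 \<bullet> v) * (f k0 \<bullet> v) \<le> Q v v"
      unfolding Q_def
      by (rule member_le_sum[where f="\<lambda>k. (f k \<bullet> v) * (f k \<bullet> v)"]) (use k0 in auto)
    moreover have "(f k0 \<bullet> v) * (f k0 \<bullet> v) > 0" using k0 v_def by simp
    ultimately have Qpos: "Q v v > 0" by linarith
    define s where "s = sqrt (Q v v)"
    have s: "s > 0" "s * s = Q v v" using Qpos by (auto simp: s_def)
    define \<beta> where "\<beta> k = (f k \<bullet> v) / s" for k
    define t where "t = (\<Sum>k<p. \<beta> k *\<^sub>R f k)"
    define f' where "f' k = f k - \<beta> k *\<^sub>R t" for k
    have ta: "t \<bullet> a = (\<Sum>k<p. \<beta> k * (f k \<bullet> a))" for a
      by (simp add: t_def inner_sum_left)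
    have bb: "(\<Sum>k<p. \<beta> k * \<beta> k) = 1"
    proof -
      have "(\<Sum>k<p. \<beta> k * \<beta> k) = (\<Sum>k<p. (f k \<bullet> v) * (f k \<bullet> v)) / (s * s)"
        by (simp add: \<beta>_def sum_divide_distrib)
      also have "\<dots> = 1" using s Qpos by (simp add: Q_def)
      finally show ?thesis .
    qed
    have iden: "(\<Sum>k<p. (f' k \<bullet> a) * (f' k \<bullet> b)) = Q a b - (t \<bullet> a) * (t \<bullet> b)" for a b
    proof -
      have "(\<Sum>k<p. (f' k \<bullet> a) * (f' k \<bullet> b)) =
            (\<Sum>k<p. (f k \<bullet> a) * (f k \<bullet> b)) - (t \<bullet> b) * (\<Sum>k<p. \<beta> k * (f k \<bullet> a))
             - (t \<bullet> a) * (\<Sum>k<p. \<beta> k * (f k \<bullet> b)) + (t \<bullet> a) * (t \<bullet> b) * (\<Sum>k<p. \<beta> k * \<beta> k)"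
        by (simp add: f'_def inner_diff_left algebra_simps sum.distrib sum_subtractf sum_distrib_left)
      then show ?thesis using ta bb by (simp add: Q_def)
    qed
    have f'v: "f' k \<bullet> v = 0" for k
    proof -
      have "t \<bullet> v = s"
      proof -
        have "t \<bullet> v = (\<Sum>k<p. (f k \<bullet> v) * (f k \<bullet> v)) / s"
          by (simp add: ta \<beta>_def sum_divide_distrib)
        also have "\<dots> = s" using s by (simp add: Q_def[symmetric] field_simps)
        finally show ?thesis .
      qed
      then show ?thesis using s by (simp add: f'_def inner_diff_left \<beta>_def)
    qed
    have tspan: "t \<in> span (f ` {..<p})"
      unfolding t_def by (intro span_sum span_mul span_base) auto
    have sub: "span (f' ` {..<p}) \<subseteq> span (f ` {..<p}) \<inter> {x. x \<bullet> v = 0}"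
    proof (rule span_minimal)
      show "f' ` {..<p} \<subseteq> span (f ` {..<p}) \<inter> {x. x \<bullet> v = 0}"
      proof
        fix x assume "x \<in> f' ` {..<p}"
        then obtain k where k: "k < p" "x = f' k" by auto
        have "f k \<in> span (f ` {..<p})" using k by (auto intro: span_base)
        then have "f' k \<in> span (f ` {..<p})" unfolding f'_def using tspan
          by (intro span_diff span_mul) auto
        then show "x \<in> span (f ` {..<p}) \<inter> {x. x \<bullet> v = 0}" using k f'v by auto
      qed
      have "subspace {x. x \<bullet> v = 0}" by (simp add: subspace_def inner_add_left)
      then show "subspace (span (f ` {..<p}) \<inter> {x. x \<bullet> v = 0})"
        by (rule subspace_inter[OF subspace_span])
    qed
    have "v \<in> span (f ` {..<p})" using k0 v_def by (auto intro: span_base)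
    moreover have "v \<notin> span (f' ` {..<p})" using sub k0 v_def by auto
    ultimately have "span (f' ` {..<p}) \<subset> span (f ` {..<p})"
      using sub by auto
    then have lt: "dim (f' ` {..<p}) < dim (f ` {..<p})" by (rule dim_psubset)
    obtain q g where qg: "q \<le> dim (f' ` {..<p})"
      "\<forall>a b. (\<Sum>k<q. (g k \<bullet> a) * (g k \<bullet> b)) = (\<Sum>k<p. (f' k \<bullet> a) * (f' k \<bullet> b))"
      using less(1)[OF lt] by blast
    define g' where "g' k = (if k = 0 then t else g (k - 1))" for k
    show ?thesis
    proof (intro exI conjI allI)
      show "Suc q \<le> dim (f ` {..<p})" using qg lt by linarith
      fix a b
      show "(\<Sum>k<Suc q. (g' k \<bullet> a) * (g' k \<bullet> b)) = (\<Sum>k<p. (f k \<bullet> a) * (f k \<bullet> b))"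
      proof -
        have "(\<Sum>k<Suc q. (g' k \<bullet> a) * (g' k \<bullet> b)) = (t \<bullet> a) * (t \<bullet> b) + (\<Sum>k<q. (g k \<bullet> a) * (g k \<bullet> b))"
          by (simp only: sum.lessThan_Suc_shift) (simp add: g'_def)
        then show ?thesis using qg iden[of a b] by (simp add: Q_def)
      qed
    qed
  qed
qed
lemma sum_if_less: "(q::nat) \<le> N \<Longrightarrow> (\<Sum>k<N. if k < q then h k else 0) = (\<Sum>k<q. (h k::real))"
proof -
  assume "q \<le> N"
  then have "{..<N} \<inter> {k. k < q} = {..<q}" by (auto simp: lessThan_def)
  then show ?thesis using sum.inter_restrict[of "{..<N}" h "{k. k < q}"] by simp
qed

lemma shift1: "(\<Sum>k\<in>{1..<Suc N}. (h k::real)) = (\<Sum>k<N. h (Suc k))"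
  using sum.shift_bounds_Suc_ivl[of h 0 N] by (simp add: atLeast0LessThan)

theorem lemma4p7:
  fixes X :: "real^'n^'n"
  assumes "gram_lorentz X"
  shows "\<exists>l :: 'n \<Rightarrow> nat \<Rightarrow> real. (\<forall>i. l i \<in> lorentz_cone (rank X + 2)) \<and>
           (\<forall>i j. X $ i $ j = inner_Rm (rank X + 2) (l i) (l j))"
proof -
  obtain m l where m: "m \<ge> 1" and cone: "\<And>i. l i \<in> lorentz_cone m"
    and Xij: "\<And>i j. X $ i $ j = inner_Rm m (l i) (l j)"
    using assms unfolding gram_lorentz_def by blast
  define v where "v k = (\<chi> i. l i k)" for k
  have Xv: "X *v a = (\<Sum>k<m. (v k \<bullet> a) *\<^sub>R v k)" for a
  proof -
    have "(X *v a) $ i = (\<Sum>k<m. (v k \<bullet> a) *\<^sub>R v k) $ i" for i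
    proof -
      have "(X *v a) $ i = (\<Sum>j\<in>UNIV. (\<Sum>k<m. l i k * l j k) * a $ j)"
        by (simp add: matrix_vector_mult_def Xij inner_Rm_def)
      also have "\<dots> = (\<Sum>k<m. (\<Sum>j\<in>UNIV. l j k * a $ j) * l i k)"
        by (simp add: sum_distrib_left sum_distrib_right sum.swap[of _ UNIV] algebra_simps)
      also have "\<dots> = (\<Sum>k<m. (v k \<bullet> a) *\<^sub>R v k) $ i"
        by (simp add: v_def inner_vec_def sum_component)
      finally show ?thesis .
    qed
    then show ?thesis by (simp add: vec_eq_iff)
  qed
  have ker: "v k \<bullet> a = 0" if "X *v a = 0" "k < m" for a k
  proof -
    have "a \<bullet> (X *v a) = (\<Sum>k<m. (v k \<bullet> a) * (v k \<bullet> a))"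
      by (simp add: Xv inner_sum_right inner_commute)
    then have "(\<Sum>k<m. (v k \<bullet> a) * (v k \<bullet> a)) = 0" using that by simp
    then have "\<forall>k\<in>{..<m}. (v k \<bullet> a) * (v k \<bullet> a) = 0"
      by (subst (asm) sum_nonneg_eq_0_iff) auto
    then show ?thesis using that by auto
  qed
  have inj: "inj_on ((*v) X) (span (v ` {..<m}))"
  proof (rule inj_onI)
    fix x y assume xy: "x \<in> span (v ` {..<m})" "y \<in> span (v ` {..<m})" "X *v x = X *v y"
    then have "X *v (x - y) = 0" by (simp add: matrix_vector_mult_diff_distrib)
    then have "orthogonal (x - y) w" if "w \<in> v ` {..<m}" for w
      using ker[of "x - y"] that \<open>X *v (x - y) = 0\<close> by (auto simp: orthogonal_def inner_commute[of "x - y"])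
    moreover have "x - y \<in> span (v ` {..<m})" using xy by (simp add: span_diff)
    ultimately have "orthogonal (x - y) (x - y)" by (rule orthogonal_to_span[rotated])
    then show "x = y" by (simp add: orthogonal_def)
  qed
  have dimv: "dim (v ` {..<m}) \<le> rank X"
  proof -
    have "dim (v ` {..<m}) = dim ((*v) X ` (v ` {..<m}))"
      by (rule dim_image_eq[symmetric]) (use inj in \<open>auto simp: matrix_vector_mul_linear\<close>)
    also have "\<dots> \<le> dim (range ((*v) X))" by (rule dim_subset) auto
    finally show ?thesis by (simp add: rank_dim_range)
  qed
  define f where "f k = v (Suc k)" for k
  have "dim (f ` {..<m-1}) \<le> dim (v ` {..<m})"
    by (rule dim_subset) (auto simp: f_def)
  with dimv have dimf: "dim (f ` {..<m-1}) \<le> rank X" by linarith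
  obtain q g where q: "q \<le> dim (f ` {..<m-1})" and
    gid: "\<And>a b. (\<Sum>k<q. (g k \<bullet> a) * (g k \<bullet> b)) = (\<Sum>k<m-1. (f k \<bullet> a) * (f k \<bullet> b))"
    using core[of f "m-1"] by blast
  have qr: "q \<le> rank X" using q dimf by linarith
  have gij: "(\<Sum>k<q. g k $ i * g k $ j) = (\<Sum>k<m-1. l i (Suc k) * l j (Suc k))" for i j
    using gid[of "axis i 1" "axis j 1"] by (simp add: inner_axis f_def v_def)
  define r where "r = rank X"
  define l' where "l' i k = (if k = 0 then l i 0 else if k \<le> q then g (k-1) $ i else 0)" for i k
  have msuc: "m = Suc (m-1)" using m by simp
  have Xij2: "X $ i $ j = l i 0 * l j 0 + (\<Sum>k<q. g k $ i * g k $ j)" for i j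
  proof -
    have "X $ i $ j = (\<Sum>k<Suc (m-1). l i k * l j k)" using msuc Xij[of i j] by (simp add: inner_Rm_def)
    also have "\<dots> = l i 0 * l j 0 + (\<Sum>k<m-1. l i (Suc k) * l j (Suc k))"
      by (simp only: sum.lessThan_Suc_shift)
    finally show ?thesis by (simp add: gij)
  qed
  have inner': "inner_Rm (r + 2) (l' i) (l' j) = l i 0 * l j 0 + (\<Sum>k<q. g k $ i * g k $ j)" for i j
  proof -
    have "inner_Rm (r + 2) (l' i) (l' j) = (\<Sum>k<Suc (r+1). l' i k * l' j k)"
      by (simp add: inner_Rm_def)
    also have "\<dots> = l i 0 * l j 0 + (\<Sum>k<r+1. l' i (Suc k) * l' j (Suc k))"
      by (simp only: sum.lessThan_Suc_shift) (simp add: l'_def)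
    also have "(\<Sum>k<r+1. l' i (Suc k) * l' j (Suc k)) = (\<Sum>k<r+1. if k < q then g k $ i * g k $ j else 0)"
      by (rule sum.cong) (auto simp: l'_def)
    also have "\<dots> = (\<Sum>k<q. g k $ i * g k $ j)"
      by (rule sum_if_less) (use qr r_def in auto)
    finally show ?thesis .
  qed
  show ?thesis
  proof (intro exI[of _ l'] conjI allI)
    fix i j
    show "X $ i $ j = inner_Rm (rank X + 2) (l' i) (l' j)"
      using Xij2 inner' r_def by simp
  next
    fix i
    have ci: "sqrt (\<Sum>k\<in>{1..<m}. (l i k)\<^sup>2) \<le> l i 0"
      using cone[of i] by (simp add: lorentz_cone_def)
    have e1: "(\<Sum>k\<in>{1..<m}. (l i k)\<^sup>2) = (\<Sum>k<q. (g k $ i)\<^sup>2)"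
    proof -
      have "(\<Sum>k\<in>{1..<m}. (l i k)\<^sup>2) = (\<Sum>k\<in>{1..<Suc (m-1)}. (l i k)\<^sup>2)" using msuc by simp
      also have "\<dots> = (\<Sum>k<m-1. (l i (Suc k))\<^sup>2)" by (rule shift1)
      also have "\<dots> = (\<Sum>k<m-1. l i (Suc k) * l i (Suc k))" by (simp add: power2_eq_square)
      finally show ?thesis using gij[of i i] by (simp add: power2_eq_square)
    qed
    have e2: "(\<Sum>k\<in>{1..<r+2}. (l' i k)\<^sup>2) = (\<Sum>k<q. (g k $ i)\<^sup>2)"
    proof -
      have "(\<Sum>k\<in>{1..<r+2}. (l' i k)\<^sup>2) = (\<Sum>k\<in>{1..<Suc (r+1)}. (l' i k)\<^sup>2)" by simp
      also have "\<dots> = (\<Sum>k<r+1. (l' i (Suc k))\<^sup>2)" by (rule shift1)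
      also have "\<dots> = (\<Sum>k<r+1. if k < q then (g k $ i)\<^sup>2 else 0)"
        by (rule sum.cong) (auto simp: l'_def)
      also have "\<dots> = (\<Sum>k<q. (g k $ i)\<^sup>2)"
        by (rule sum_if_less) (use qr r_def in auto)
      finally show ?thesis .
    qed
    have "in_Rm (r + 2) (l' i)"
      unfolding in_Rm_def l'_def using qr r_def by auto
    moreover have "l' i 0 = l i 0" by (simp add: l'_def)
    moreover have "sqrt (\<Sum>k\<in>{1..<r+2}. (l' i k)\<^sup>2) \<le> l' i 0"
      using ci e1 e2 \<open>l' i 0 = l i 0\<close> by simp
    ultimately have "l' i \<in> lorentz_cone (r + 2)"
      unfolding lorentz_cone_def by simp
    then show "l' i \<in> lorentz_cone (rank X + 2)" using r_def by simp
  qed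
qed
end
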